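(* Consider the projected pseudo-gradient descent algorithm described below, with accuracy parameter $\epsilon \in (0,1)$. In every descent step $t$, the computed pseudo-gradient $\widehat G$ equals the exact gradient (with respect to $\beta$, at $\beta = \beta^{(t)}$) of $F(\beta, X^{(t)})$ for some labeled point set $X^{(t)}$ that is an $\epsilon$-perturbation of $X$ (with the same labels).
   Context: Setting: $X = \{x_1,\dots,x_N\}$ is the set of rows of a design matrix $J = T_1\Join\cdots\Join T_m$, each row a point in $[-1,1]^d$ with label $y_i \in\{-1,1\}$; $\lambda>0$. For a labeled point set $X$, $F(\beta, X) = \frac{1}{N}\sum_i \max(0,1-y_i\beta\cdot x_i) + \lambda\|\beta\|_2^2$, with gradient $\nabla_\beta F(\beta,X) = 2\lambda\beta - \frac{1}{N}\sum_{i:\ 1-y_i\beta\cdot x_i\ge 0} y_i x_i$. For a vector $v$, $|v|$ denotes the vector of entrywise absolute values. A point $p$ is an $\epsilon$-perturbation of $q$ if $p_j = c_j q_j$ with $c_j \in [1-\epsilon,1+\epsilon]$ for every coordinate $j$; a point set $X_a$ is an $\epsilon$-perturbation of $X_b$ if there is a label-preserving bijection mapping each point to an $\epsilon$-perturbation of it. For $j\in[d]$, $D(j)$ is the set of values occurring in column $j$. Pseudo-gradient at $\beta^{(t)}$: (1) For each $j\in[d]$, $v \in D(j)$, compute a $(1+\epsilon)$-approximation $\widehat C^-_{j,v}$ (i.e. $C/(1+\epsilon)\le \widehat C\le(1+\epsilon)C$) of $C^-_{j,v}$, the number of rows $x$ with label $-1$, value $v$ in column $j$, and $1+\beta^{(t)}\cdot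 x \ge \epsilon|\beta^{(t)}|\cdot|x|$. (2) Similarly $\widehat C^+_{j,v}$ approximates $C^+_{j,v}$, the number of rows with label $+1$, value $v$ in column $j$, and $1-\beta^{(t)}\cdot x\ge \epsilon|\beta^{(t)}|\cdot|x|$. (3) $\widehat G^-_k = \sum_{v\in D(k),v<0} v\widehat C^-_{k,v} - \sum_{v\in D(k), v\ge 0} v\widehat C^+_{k,v}$. (4) $\widehat G^+_k = \sum_{v\in D(k),v\ge0} v\widehat C^-_{k,v} - \sum_{v\in D(k),v<0} v\widehat C^+_{k,v}$. (5) $\widehat G = \frac{\widehat G^- + \widehat G^+}{N} + 2\lambda\beta^{(t)}$. Descent: $\beta^{(0)}=0$, $\beta^{(t+1)} = \Pi_{\mathcal K}(\beta^{(t)} - \eta_{t+1}\widehat G)$ with $\eta_t = \frac{1}{\lambda\sqrt{dt}}$ and $\mathcal K$ the ball of radius $\frac{\sqrt d}{2\lambda}$ centered at the origin. *)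

theory Defs
  imports "HOL-Analysis.Analysis"
begin

text \<open>A labeled point set with N points is an indexed family x :: nat => real^'d
  (points x 0, ..., x (N-1)) together with labels y :: nat => real in {-1,1}.\<close>

definition svm_F :: "real \<Rightarrow> nat \<Rightarrow> (nat \<Rightarrow> real^'d) \<Rightarrow> (nat \<Rightarrow> real) \<Rightarrow> real^'d \<Rightarrow> real" where
  "svm_F lam N x y \<beta> =
     (1 / real N) * (\<Sum>i<N. max 0 (1 - y i * (\<beta> \<bullet> x i))) + lam * (norm \<beta>)\<^sup>2"

definition svm_grad :: "real \<Rightarrow> nat \<Rightarrow> (nat \<Rightarrow> real^'d) \<Rightarrow> (nat \<Rightarrow> real) \<Rightarrow> real^'d \<Rightarrow> real^'d" where
  "svm_grad lam N x y \<beta> =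
     (2 * lam) *\<^sub>R \<beta> - (1 / real N) *\<^sub>R (\<Sum>i\<in>{i. i < N \<and> 1 - y i * (\<beta> \<bullet> x i) \<ge> 0}. y i *\<^sub>R x i)"

definition perturb_pt :: "real \<Rightarrow> real^'d \<Rightarrow> real^'d \<Rightarrow> bool" where
  "perturb_pt \<epsilon> p q \<longleftrightarrow> (\<forall>j. \<exists>c. 1 - \<epsilon> \<le> c \<and> c \<le> 1 + \<epsilon> \<and> p $ j = c * q $ j)"

definition perturbation :: "real \<Rightarrow> nat \<Rightarrow> (nat \<Rightarrow> real^'d) \<Rightarrow> (nat \<Rightarrow> real)
     \<Rightarrow> (nat \<Rightarrow> real^'d) \<Rightarrow> (nat \<Rightarrow> real) \<Rightarrow> bool" where
  "perturbation \<epsilon> N x' y' x y \<longleftrightarrow>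
     (\<exists>\<sigma>. bij_betw \<sigma> {..<N} {..<N} \<and>
        (\<forall>i<N. y' (\<sigma> i) = y i \<and> perturb_pt \<epsilon> (x' (\<sigma> i)) (x i)))"

definition col_vals :: "nat \<Rightarrow> (nat \<Rightarrow> real^'d) \<Rightarrow> 'd \<Rightarrow> real set" where
  "col_vals N x j = {x i $ j | i. i < N}"

definition abs_dot :: "real^'d \<Rightarrow> real^'d \<Rightarrow> real" where
  "abs_dot b p = (\<Sum>k\<in>UNIV. \<bar>b $ k\<bar> * \<bar>p $ k\<bar>)"

definition C_minus :: "real \<Rightarrow> nat \<Rightarrow> (nat \<Rightarrow> real^'d) \<Rightarrow> (nat \<Rightarrow> real) \<Rightarrow> real^'d \<Rightarrow> 'd \<Rightarrow> real \<Rightarrow> nat" where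
  "C_minus \<epsilon> N x y \<beta> j v = card {i. i < N \<and> y i = -1 \<and> x i $ j = v \<and>
       1 + \<beta> \<bullet> x i \<ge> \<epsilon> * abs_dot \<beta> (x i)}"

definition C_plus :: "real \<Rightarrow> nat \<Rightarrow> (nat \<Rightarrow> real^'d) \<Rightarrow> (nat \<Rightarrow> real) \<Rightarrow> real^'d \<Rightarrow> 'd \<Rightarrow> real \<Rightarrow> nat" where
  "C_plus \<epsilon> N x y \<beta> j v = card {i. i < N \<and> y i = 1 \<and> x i $ j = v \<and>
       1 - \<beta> \<bullet> x i \<ge> \<epsilon> * abs_dot \<beta> (x i)}"

definition approx :: "real \<Rightarrow> real \<Rightarrow> real \<Rightarrow> bool" where
  "approx \<epsilon> Ch C \<longleftrightarrow> C / (1 + \<epsilon>) \<le> Ch \<and> Ch \<le> (1 + \<epsilon>) * C"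

definition G_minus :: "nat \<Rightarrow> (nat \<Rightarrow> real^'d) \<Rightarrow> ('d \<Rightarrow> real \<Rightarrow> real) \<Rightarrow> ('d \<Rightarrow> real \<Rightarrow> real) \<Rightarrow> 'd \<Rightarrow> real" where
  "G_minus N x Chm Chp k =
     (\<Sum>v\<in>{v\<in>col_vals N x k. v < 0}. v * Chm k v) - (\<Sum>v\<in>{v\<in>col_vals N x k. v \<ge> 0}. v * Chp k v)"

definition G_plus :: "nat \<Rightarrow> (nat \<Rightarrow> real^'d) \<Rightarrow> ('d \<Rightarrow> real \<Rightarrow> real) \<Rightarrow> ('d \<Rightarrow> real \<Rightarrow> real) \<Rightarrow> 'd \<Rightarrow> real" where
  "G_plus N x Chm Chp k =
     (\<Sum>v\<in>{v\<in>col_vals N x k. v \<ge> 0}. v * Chm k v) - (\<Sum>v\<in>{v\<in>col_vals N x k. v < 0}. v * Chp k v)"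

definition pseudo_grad :: "real \<Rightarrow> nat \<Rightarrow> (nat \<Rightarrow> real^'d) \<Rightarrow> real^'d
     \<Rightarrow> ('d \<Rightarrow> real \<Rightarrow> real) \<Rightarrow> ('d \<Rightarrow> real \<Rightarrow> real) \<Rightarrow> real^'d" where
  "pseudo_grad lam N x \<beta> Chm Chp =
     (\<chi> k. (G_minus N x Chm Chp k + G_plus N x Chm Chp k) / real N + 2 * lam * \<beta> $ k)"

end

theory Submission
  imports Defs
begin

lemma pert_dot:
  fixes b p q :: "real^'d"
  assumes "\<forall>j. \<bar>p$j - q$j\<bar> \<le> \<epsilon> * \<bar>q$j\<bar>"
  shows "\<bar>b \<bullet> p - b \<bullet> q\<bar> \<le> \<epsilon> * abs_dot b q"
proof -
  have "b \<bullet> p - b \<bullet> q = (\<Sum>j\<in>UNIV. b$j * (p$j - q$j))"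
    by (simp add: inner_vec_def sum_subtractf[symmetric] algebra_simps)
  also have "\<bar>\<dots>\<bar> \<le> (\<Sum>j\<in>UNIV. \<bar>b$j * (p$j - q$j)\<bar>)" by (rule sum_abs)
  also have "\<dots> \<le> (\<Sum>j\<in>UNIV. \<epsilon> * (\<bar>b$j\<bar> * \<bar>q$j\<bar>))"
  proof (rule sum_mono)
    fix j :: 'd
    have "\<bar>b$j * (p$j - q$j)\<bar> = \<bar>b$j\<bar> * \<bar>p$j - q$j\<bar>" by (simp add: abs_mult)
    also have "\<dots> \<le> \<bar>b$j\<bar> * (\<epsilon> * \<bar>q$j\<bar>)" using assms by (simp add: mult_left_mono)
    finally show "\<bar>b$j * (p$j - q$j)\<bar> \<le> \<epsilon> * (\<bar>b$j\<bar> * \<bar>q$j\<bar>)" by (simp add: mult_ac)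
  qed
  finally show ?thesis by (simp add: abs_dot_def sum_distrib_left)
qed

lemma ratio_bounds:
  fixes \<epsilon> Ch C :: real
  assumes "0 < \<epsilon>" "\<epsilon> < 1" "approx \<epsilon> Ch C" "C > 0"
  shows "1 - \<epsilon> \<le> Ch / C \<and> Ch / C \<le> 1 + \<epsilon>"
proof -
  have a: "C / (1 + \<epsilon>) \<le> Ch" "Ch \<le> (1 + \<epsilon>) * C" using assms(3) by (auto simp: approx_def)
  have e1: "(1 - \<epsilon>) * C * (1 + \<epsilon>) = C - \<epsilon> * \<epsilon> * C" by (simp add: algebra_simps)
  have e2: "\<epsilon> * \<epsilon> * C \<ge> 0" using assms(4) by simp
  have p: "1 + \<epsilon> > 0" using assms(1) by simp
  have "(1 - \<epsilon>) * C \<le> C / (1 + \<epsilon>)"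
    using e1 e2 by (subst pos_le_divide_eq[OF p]) linarith
  hence "(1 - \<epsilon>) * C \<le> Ch" using a(1) by linarith
  hence l: "1 - \<epsilon> \<le> Ch / C" by (subst pos_le_divide_eq[OF assms(4)])
  have "Ch / C \<le> 1 + \<epsilon>" using a(2) by (subst pos_divide_le_eq[OF assms(4)])
  with l show ?thesis by simp
qed

lemma approx_zero:
  assumes "0 < \<epsilon>" "approx \<epsilon> Ch 0" shows "Ch = 0"
  using assms by (auto simp: approx_def)

lemma one_step:
  fixes x :: "nat \<Rightarrow> real^'d" and y :: "nat \<Rightarrow> real" and N :: nat
    and lam \<epsilon> :: real and b :: "real^'d"
    and Cm Cp :: "'d \<Rightarrow> real \<Rightarrow> real"
  assumes eps: "0 < \<epsilon>" "\<epsilon> < 1"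
    and labels: "\<forall>i<N. y i = -1 \<or> y i = 1"
    and am: "\<forall>j v. v \<in> col_vals N x j \<longrightarrow> approx \<epsilon> (Cm j v) (real (C_minus \<epsilon> N x y b j v))"
    and ap: "\<forall>j v. v \<in> col_vals N x j \<longrightarrow> approx \<epsilon> (Cp j v) (real (C_plus \<epsilon> N x y b j v))"
  shows "\<exists>x' y'. perturbation \<epsilon> N x' y' x y \<and>
           pseudo_grad lam N x b Cm Cp = svm_grad lam N x' y' b"
proof -
  define cnt where "cnt i \<longleftrightarrow> 1 - y i * (b \<bullet> x i) \<ge> \<epsilon> * abs_dot b (x i)" for i
  define ratio where "ratio i j = (if y i = -1 then Cm j (x i $ j) / real (C_minus \<epsilon> N x y b j (x i $ j))
      else Cp j (x i $ j) / real (C_plus \<epsilon> N x y b j (x i $ j)))" for i j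
  define c where "c i j = (if cnt i then ratio i j else 1 + y i * \<epsilon> * sgn (b$j * x i $ j))" for i j
  define x' where "x' i = (\<chi> j. c i j * x i $ j)" for i
  have cb: "1 - \<epsilon> \<le> c i j \<and> c i j \<le> 1 + \<epsilon>" if i: "i < N" for i j
  proof (cases "cnt i")
    case True
    show ?thesis
    proof (cases "y i = -1")
      case True
      let ?S = "{i'. i' < N \<and> y i' = -1 \<and> x i' $ j = x i $ j \<and> 1 + b \<bullet> x i' \<ge> \<epsilon> * abs_dot b (x i')}"
      have "i \<in> ?S" using \<open>cnt i\<close> True i by (simp add: cnt_def)
      moreover have "finite ?S" by simp
      ultimately have "card ?S > 0" by (simp add: card_gt_0_iff) blast
      hence pos: "real (C_minus \<epsilon> N x y b j (x i $ j)) > 0" by (simp add: C_minus_def)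
      have "x i $ j \<in> col_vals N x j" using i by (auto simp: col_vals_def)
      hence "approx \<epsilon> (Cm j (x i $ j)) (real (C_minus \<epsilon> N x y b j (x i $ j)))" using am by blast
      from ratio_bounds[OF eps this pos] show ?thesis
        using \<open>cnt i\<close> True by (simp add: c_def ratio_def)
    next
      case False
      hence y1: "y i = 1" using labels i by blast
      let ?S = "{i'. i' < N \<and> y i' = 1 \<and> x i' $ j = x i $ j \<and> 1 - b \<bullet> x i' \<ge> \<epsilon> * abs_dot b (x i')}"
      have "i \<in> ?S" using \<open>cnt i\<close> y1 i by (simp add: cnt_def)
      moreover have "finite ?S" by simp
      ultimately have "card ?S > 0" by (simp add: card_gt_0_iff) blast
      hence pos: "real (C_plus \<epsilon> N x y b j (x i $ j)) > 0" by (simp add: C_plus_def)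
      have "x i $ j \<in> col_vals N x j" using i by (auto simp: col_vals_def)
      hence "approx \<epsilon> (Cp j (x i $ j)) (real (C_plus \<epsilon> N x y b j (x i $ j)))" using ap by blast
      from ratio_bounds[OF eps this pos] show ?thesis
        using \<open>cnt i\<close> y1 by (simp add: c_def ratio_def)
    qed
  next
    case False
    have "y i = -1 \<or> y i = 1" using labels i by blast
    moreover have "sgn (b$j * x i $ j) \<in> {-1, 0, 1}" by (simp add: sgn_real_def)
    ultimately show ?thesis using False eps by (auto simp: c_def)
  qed
  have act: "(1 - y i * (b \<bullet> x' i) \<ge> 0) \<longleftrightarrow> cnt i" if i: "i < N" for i
  proof (cases "cnt i")
    case True
    have "\<forall>j. \<bar>x' i $ j - x i $ j\<bar> \<le> \<epsilon> * \<bar>x i $ j\<bar>"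
    proof
      fix j
      have "\<bar>x' i $ j - x i $ j\<bar> = \<bar>c i j - 1\<bar> * \<bar>x i $ j\<bar>"
        by (simp add: x'_def abs_mult[symmetric] algebra_simps)
      also have "\<dots> \<le> \<epsilon> * \<bar>x i $ j\<bar>" using cb[OF i, of j] by (intro mult_right_mono) auto
      finally show "\<bar>x' i $ j - x i $ j\<bar> \<le> \<epsilon> * \<bar>x i $ j\<bar>" .
    qed
    from pert_dot[OF this, of b] have d: "\<bar>b \<bullet> x' i - b \<bullet> x i\<bar> \<le> \<epsilon> * abs_dot b (x i)" .
    have "y i = -1 \<or> y i = 1" using labels i by blast
    then show ?thesis using True d by (auto simp: cnt_def abs_le_iff)
  next
    case False
    have yy: "y i * y i = 1" using labels i by auto
    have "y i * (b \<bullet> x' i) = (\<Sum>j\<in>UNIV. y i * (b$j * x i $ j) + \<epsilon> * (y i * y i) * \<bar>b$j * x i $ j\<bar>)"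
      using False
      by (simp add: x'_def c_def inner_vec_def sum_distrib_left algebra_simps abs_sgn)
    also have "\<dots> = y i * (b \<bullet> x i) + \<epsilon> * abs_dot b (x i)"
      by (simp add: yy sum.distrib inner_vec_def sum_distrib_left abs_dot_def abs_mult)
    finally show ?thesis using False by (simp add: cnt_def)
  qed
  show ?thesis
  proof (intro exI conjI)
    show "perturbation \<epsilon> N x' y x y"
      unfolding perturbation_def perturb_pt_def
    proof (rule exI[of _ id], intro conjI allI impI)
      show "bij_betw id {..<N} {..<N}" by simp
    next
      fix i assume "i < N"
      then show "y (id i) = y i" by simp
    next
      fix i j assume i: "i < N"
      show "\<exists>ca. 1 - \<epsilon> \<le> ca \<and> ca \<le> 1 + \<epsilon> \<and> x' (id i) $ j = ca * x i $ j"
      proof -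
        have "x' (id i) $ j = c i j * x i $ j" by (simp add: x'_def)
        with cb[OF i, of j] show ?thesis by blast
      qed
    qed
    show "pseudo_grad lam N x b Cm Cp = svm_grad lam N x' y b"
    proof (rule vec_eq_iff[THEN iffD2], intro allI)
      fix k :: 'd
      define V where "V = col_vals N x k"
      have fV: "finite V" unfolding V_def col_vals_def by simp
      define S where "S = {i. i < N \<and> 1 - y i * (b \<bullet> x' i) \<ge> 0}"
      have S: "S = {i. i < N \<and> cnt i}" using act by (auto simp: S_def)
      have sum_y: "(\<Sum>i\<in>S. y i * x' i $ k) =
          (\<Sum>i\<in>{i\<in>S. y i = 1}. x' i $ k) - (\<Sum>i\<in>{i\<in>S. y i = -1}. x' i $ k)"
      proof -
        have un: "S = {i\<in>S. y i = 1} \<union> {i\<in>S. y i = -1}" using labels by (auto simp: S)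
        have "(\<Sum>i\<in>S. y i * x' i $ k) = (\<Sum>i\<in>{i\<in>S. y i = 1}. y i * x' i $ k) + (\<Sum>i\<in>{i\<in>S. y i = -1}. y i * x' i $ k)"
          by (subst un, rule sum.union_disjoint) (auto simp: S)
        also have "\<dots> = (\<Sum>i\<in>{i\<in>S. y i = 1}. x' i $ k) - (\<Sum>i\<in>{i\<in>S. y i = -1}. x' i $ k)"
          by (simp add: sum_negf)
        finally show ?thesis .
      qed
      have minus: "(\<Sum>i\<in>{i\<in>S. y i = -1}. x' i $ k) = (\<Sum>v\<in>V. v * Cm k v)"
      proof -
        have "(\<Sum>i\<in>{i\<in>S. y i = -1}. x' i $ k) = (\<Sum>v\<in>V. \<Sum>i\<in>{i\<in>{i\<in>S. y i = -1}. x i $ k = v}. x' i $ k)"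
          by (rule sum.group[symmetric]) (auto simp: S V_def col_vals_def fV)
        also have "\<dots> = (\<Sum>v\<in>V. v * Cm k v)"
        proof (rule sum.cong[OF refl])
          fix v assume v: "v \<in> V"
          have eq: "{i\<in>{i\<in>S. y i = -1}. x i $ k = v} = {i. i < N \<and> y i = -1 \<and> x i $ k = v \<and> 1 + b \<bullet> x i \<ge> \<epsilon> * abs_dot b (x i)}"
            by (auto simp: S cnt_def)
          have "(\<Sum>i\<in>{i\<in>{i\<in>S. y i = -1}. x i $ k = v}. x' i $ k) = (\<Sum>i\<in>{i\<in>{i\<in>S. y i = -1}. x i $ k = v}. Cm k v / real (C_minus \<epsilon> N x y b k v) * v)"
            by (rule sum.cong[OF refl]) (auto simp: S x'_def c_def ratio_def)
          also have "\<dots> = real (C_minus \<epsilon> N x y b k v) * (Cm k v / real (C_minus \<epsilon> N x y b k v) * v)"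
            unfolding eq by (simp add: C_minus_def)
          also have "\<dots> = v * Cm k v"
          proof (cases "C_minus \<epsilon> N x y b k v = 0")
            case True
            have "approx \<epsilon> (Cm k v) 0" using am v True unfolding V_def by force
            thus ?thesis using approx_zero[OF eps(1)] True by simp
          qed simp
          finally show "(\<Sum>i\<in>{i\<in>{i\<in>S. y i = -1}. x i $ k = v}. x' i $ k) = v * Cm k v" .
        qed
        finally show ?thesis .
      qed
      have plus: "(\<Sum>i\<in>{i\<in>S. y i = 1}. x' i $ k) = (\<Sum>v\<in>V. v * Cp k v)"
      proof -
        have "(\<Sum>i\<in>{i\<in>S. y i = 1}. x' i $ k) = (\<Sum>v\<in>V. \<Sum>i\<in>{i\<in>{i\<in>S. y i = 1}. x i $ k = v}. x' i $ k)"
          by (rule sum.group[symmetric]) (auto simp: S V_def col_vals_def fV)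
        also have "\<dots> = (\<Sum>v\<in>V. v * Cp k v)"
        proof (rule sum.cong[OF refl])
          fix v assume v: "v \<in> V"
          have eq: "{i\<in>{i\<in>S. y i = 1}. x i $ k = v} = {i. i < N \<and> y i = 1 \<and> x i $ k = v \<and> 1 - b \<bullet> x i \<ge> \<epsilon> * abs_dot b (x i)}"
            by (auto simp: S cnt_def)
          have "(\<Sum>i\<in>{i\<in>{i\<in>S. y i = 1}. x i $ k = v}. x' i $ k) = (\<Sum>i\<in>{i\<in>{i\<in>S. y i = 1}. x i $ k = v}. Cp k v / real (C_plus \<epsilon> N x y b k v) * v)"
            by (rule sum.cong[OF refl]) (auto simp: S x'_def c_def ratio_def)
          also have "\<dots> = real (C_plus \<epsilon> N x y b k v) * (Cp k v / real (C_plus \<epsilon> N x y b k v) * v)"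
            unfolding eq by (simp add: C_plus_def)
          also have "\<dots> = v * Cp k v"
          proof (cases "C_plus \<epsilon> N x y b k v = 0")
            case True
            have "approx \<epsilon> (Cp k v) 0" using ap v True unfolding V_def by force
            thus ?thesis using approx_zero[OF eps(1)] True by simp
          qed simp
          finally show "(\<Sum>i\<in>{i\<in>{i\<in>S. y i = 1}. x i $ k = v}. x' i $ k) = v * Cp k v" .
        qed
        finally show ?thesis .
      qed
      have split: "\<And>f :: real \<Rightarrow> real. (\<Sum>v\<in>{v\<in>V. v < 0}. f v) + (\<Sum>v\<in>{v\<in>V. v \<ge> 0}. f v) = (\<Sum>v\<in>V. f v)"
      proof -
        fix f :: "real \<Rightarrow> real"
        have e: "V = {v\<in>V. v < 0} \<union> {v\<in>V. v \<ge> 0}" by auto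
        have "(\<Sum>v\<in>V. f v) = (\<Sum>v\<in>{v\<in>V. v < 0}. f v) + (\<Sum>v\<in>{v\<in>V. v \<ge> 0}. f v)"
          by (subst e, rule sum.union_disjoint) (use fV in auto)
        then show "(\<Sum>v\<in>{v\<in>V. v < 0}. f v) + (\<Sum>v\<in>{v\<in>V. v \<ge> 0}. f v) = (\<Sum>v\<in>V. f v)"
          by simp
      qed
      have G: "G_minus N x Cm Cp k + G_plus N x Cm Cp k = (\<Sum>v\<in>V. v * Cm k v) - (\<Sum>v\<in>V. v * Cp k v)"
        using split[of "\<lambda>v. v * Cm k v"] split[of "\<lambda>v. v * Cp k v"]
        unfolding G_minus_def G_plus_def V_def[symmetric] by linarith
      have p1: "pseudo_grad lam N x b Cm Cp $ k = (G_minus N x Cm Cp k + G_plus N x Cm Cp k) / real N + 2 * lam * b $ k"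
        unfolding pseudo_grad_def by simp
      have p2: "svm_grad lam N x' y b $ k = 2 * lam * b $ k - (\<Sum>i\<in>S. y i * x' i $ k) / real N"
        unfolding svm_grad_def S_def by simp
      have hS: "(\<Sum>i\<in>S. y i * x' i $ k) = (\<Sum>v\<in>V. v * Cp k v) - (\<Sum>v\<in>V. v * Cm k v)"
        using sum_y minus plus by simp
      show "pseudo_grad lam N x b Cm Cp $ k = svm_grad lam N x' y b $ k"
        unfolding p1 p2 G hS by (simp add: diff_divide_distrib)
    qed
  qed
qed

theorem lemma2:
  fixes x :: "nat \<Rightarrow> real^'d" and y :: "nat \<Rightarrow> real" and N :: nat
    and lam \<epsilon> :: real
    and \<beta> :: "nat \<Rightarrow> real^'d"
    and Chm Chp :: "nat \<Rightarrow> 'd \<Rightarrow> real \<Rightarrow> real"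
  assumes eps: "0 < \<epsilon>" "\<epsilon> < 1"
    and lam: "lam > 0"
    and labels: "\<forall>i<N. y i = -1 \<or> y i = 1"
    and box: "\<forall>i<N. \<forall>j. \<bar>x i $ j\<bar> \<le> 1"
    and approx_minus: "\<forall>t j v. v \<in> col_vals N x j \<longrightarrow>
                         approx \<epsilon> (Chm t j v) (real (C_minus \<epsilon> N x y (\<beta> t) j v))"
    and approx_plus: "\<forall>t j v. v \<in> col_vals N x j \<longrightarrow>
                         approx \<epsilon> (Chp t j v) (real (C_plus \<epsilon> N x y (\<beta> t) j v))"
    and init: "\<beta> 0 = 0"
    and step: "\<forall>t. \<beta> (Suc t) =
       closest_point (cball 0 (sqrt (real CARD('d)) / (2 * lam)))
         (\<beta> t - (1 / (lam * sqrt (real CARD('d) * real (Suc t)))) *\<^sub>R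
                  pseudo_grad lam N x (\<beta> t) (Chm t) (Chp t))"
  shows "\<forall>t. \<exists>x' y'. perturbation \<epsilon> N x' y' x y \<and>
           pseudo_grad lam N x (\<beta> t) (Chm t) (Chp t) = svm_grad lam N x' y' (\<beta> t)"
proof
  fix t
  show "\<exists>x' y'. perturbation \<epsilon> N x' y' x y \<and>
           pseudo_grad lam N x (\<beta> t) (Chm t) (Chp t) = svm_grad lam N x' y' (\<beta> t)"
  proof (rule one_step[OF eps labels])
    show "\<forall>j v. v \<in> col_vals N x j \<longrightarrow> approx \<epsilon> (Chm t j v) (real (C_minus \<epsilon> N x y (\<beta> t) j v))"
      using approx_minus by simp
    show "\<forall>j v. v \<in> col_vals N x j \<longrightarrow> approx \<epsilon> (Chp t j v) (real (C_plus \<epsilon> N x y (\<beta> t) j v))"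
      using approx_plus by simp
  qed
qed

end
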